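(* Let $k>1$ divide $n+1$ and let $(a,0)$ be a general point of $\mathcal U_{n/k}$, so that $A=\int a$ satisfies $A=\tilde A\circ W$ with $\deg W=k$, $W(0)=W(1)$, $\deg\tilde A=(n+1)/k$. Then the Zariski tangent space $T_{(a,0)}\mathcal U_{n/k}$ is the vector space of pairs of polynomials $(p_1,q_1)$ of degree at most $n$ whose primitives $P_1=\int p_1$, $Q_1=\int q_1$ can be written as $$P_1(x)=\tilde P_1(W(x))+R(x)\,\tilde A'(W(x)),\qquad Q_1(x)=\tilde Q_1(W(x)),$$ where $\tilde P_1,\tilde Q_1$ are arbitrary polynomials of degree at most $(n+1)/k$ and $R$ is any polynomial of degree (at most) $k$ with $R(0)=R(1)$.
   Context: Work over $\mathbb C$. $\mathcal A_n\cong\mathbb C^{2n+2}$ is the vector space of pairs $(a,b)$ of polynomials of degree at most $n$. For $k>1$ dividing $n+1$, $\mathcal U_{n/k}\subset\mathcal A_n$ is the Zariski closure of the set of pairs $(a,b)$ for which there exist polynomials $\tilde A,\tilde B,W$ of degrees $(n+1)/k,(n+1)/k,k$ with $\int a=\tilde A\circ W$, $\int b=\tilde B\circ W$ (up to additive constants) and $W(0)=W(1)$. "General point" means a point in a suitable nonempty Zariski open subset. *)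

theory Defs
  imports "HOL-Analysis.Analysis" "HOL-Computational_Algebra.Polynomial"
begin

text \<open>The affine space A_n of pairs of polynomials of degree at most n (identified with C^(2n+2)
  via coefficients).\<close>
definition An :: "nat \<Rightarrow> (complex poly \<times> complex poly) set" where
  "An n = {(a, b). degree a \<le> n \<and> degree b \<le> n}"

inductive_set polyfun :: "nat \<Rightarrow> (complex poly \<times> complex poly \<Rightarrow> complex) set" for n where
  const: "(\<lambda>x. c) \<in> polyfun n"
| coordA: "i \<le> n \<Longrightarrow> (\<lambda>x. coeff (fst x) i) \<in> polyfun n"
| coordB: "i \<le> n \<Longrightarrow> (\<lambda>x. coeff (snd x) i) \<in> polyfun n"
| add: "f \<in> polyfun n \<Longrightarrow> g \<in> polyfun n \<Longrightarrow> (\<lambda>x. f x + g x) \<in> polyfun n"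
| mult: "f \<in> polyfun n \<Longrightarrow> g \<in> polyfun n \<Longrightarrow> (\<lambda>x. f x * g x) \<in> polyfun n"

definition vanishing_ideal :: "nat \<Rightarrow> (complex poly \<times> complex poly) set
    \<Rightarrow> (complex poly \<times> complex poly \<Rightarrow> complex) set" where
  "vanishing_ideal n S = {f \<in> polyfun n. \<forall>s\<in>S. f s = 0}"

definition zariski_closure :: "nat \<Rightarrow> (complex poly \<times> complex poly) set
    \<Rightarrow> (complex poly \<times> complex poly) set" where
  "zariski_closure n S = {x \<in> An n. \<forall>f \<in> vanishing_ideal n S. f x = 0}"

definition zariski_tangent :: "nat \<Rightarrow> (complex poly \<times> complex poly) set
    \<Rightarrow> complex poly \<times> complex poly \<Rightarrow> (complex poly \<times> complex poly) set" where
  "zariski_tangent n V p = {v \<in> An n. \<forall>f \<in> vanishing_ideal n V.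
      ((\<lambda>t. f (fst p + smult t (fst v), snd p + smult t (snd v))) has_field_derivative 0) (at 0)}"

text \<open>The primitive of a polynomial with zero constant term.\<close>
definition prim :: "complex poly \<Rightarrow> complex poly" where
  "prim p = (\<Sum>i\<le>degree p. monom (coeff p i / of_nat (Suc i)) (Suc i))"

text \<open>U_{n/k}: Zariski closure of pairs (a,b) with int a = A~ o W, int b = B~ o W (up to additive
  constants, absorbed in the constant terms of A~, B~), deg A~ = deg B~ = (n+1)/k, deg W = k,
  W(0) = W(1).\<close>
definition U_set :: "nat \<Rightarrow> nat \<Rightarrow> (complex poly \<times> complex poly) set" where
  "U_set n k = zariski_closure n {(a, b) \<in> An n. \<exists>At Bt W.
      degree At = (n + 1) div k \<and> degree Bt = (n + 1) div k \<and> degree W = k \<and>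
      poly W 0 = poly W 1 \<and> prim a = pcompose At W \<and> prim b = pcompose Bt W}"

end

theory Submission
  imports Defs
begin

lemma coeff_prim: "coeff (prim p) j = (if j = 0 then 0 else coeff p (j - 1) / of_nat j)"
proof -
  have "coeff (prim p) j = (\<Sum>i\<le>degree p. if Suc i = j then coeff p i / of_nat (Suc i) else 0)"
    unfolding prim_def coeff_sum by (simp del: of_nat_Suc)
  also have "\<dots> = (if j = 0 then 0 else coeff p (j - 1) / of_nat j)"
  proof (cases j)
    case 0 then show ?thesis by simp
  next
    case (Suc i)
    show ?thesis
    proof (cases "i \<le> degree p")
      case True
      then show ?thesis using Suc by (simp add: sum.delta)
    next
      case False
      then show ?thesis using Suc by (simp add: coeff_eq_0)
    qed
  qed
  finally show ?thesis .
qed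

lemma prim_add: "prim (p + q) = prim p + prim q"
  by (rule poly_eqI) (simp add: coeff_prim add_divide_distrib)
lemma prim_smult: "prim (smult t p) = smult t (prim p)"
  by (rule poly_eqI) (simp add: coeff_prim)
lemma prim_0[simp]: "prim 0 = 0"
  by (rule poly_eqI) (simp add: coeff_prim)
lemma pderiv_prim[simp]: "pderiv (prim p) = p"
  by (rule poly_eqI) (simp add: coeff_prim coeff_pderiv del: of_nat_Suc)
lemma prim_pderiv: "prim (pderiv p) = p - [:coeff p 0:]"
  by (rule poly_eqI) (auto simp: coeff_prim coeff_pderiv coeff_pCons split: nat.splits simp del: of_nat_Suc)
lemma degree_prim: "degree (prim p) \<le> degree p + 1"
  by (rule degree_le) (auto simp: coeff_prim coeff_eq_0)

lemma pcompose_monom: "pcompose (monom a i) q = smult a (q ^ i)"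
  by (induction i) (auto simp: monom_Suc pcompose_pCons pcompose_smult monom_0 smult_pCons)

lemma pcompose_sum_formula:
  assumes "degree p \<le> D"
  shows "pcompose p q = (\<Sum>i\<le>D. smult (coeff p i) (q ^ i))"
proof -
  have "pcompose p q = pcompose (\<Sum>i\<le>D. monom (coeff p i) i) q"
    using poly_as_sum_of_monoms'[OF assms] by simp
  also have "\<dots> = (\<Sum>i\<le>D. smult (coeff p i) (q ^ i))"
    by (simp add: pcompose_sum pcompose_monom)
  finally show ?thesis .
qed

lemma polyfun_deriv:
  assumes "f \<in> polyfun n"
  shows "\<exists>Df. \<forall>\<gamma> V. (\<forall>i\<le>n. ((\<lambda>t. coeff (fst (\<gamma> t)) i) has_field_derivative coeff (fst V) i) (at 0)
            \<and> ((\<lambda>t. coeff (snd (\<gamma> t)) i) has_field_derivative coeff (snd V) i) (at 0))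
         \<longrightarrow> ((\<lambda>t. f (\<gamma> t)) has_field_derivative Df (\<gamma> 0) V) (at 0)"
  using assms
proof (induction rule: polyfun.induct)
  case (const c)
  show ?case by (rule exI[of _ "\<lambda>_ _. 0"]) auto
next
  case (coordA i)
  show ?case by (rule exI[of _ "\<lambda>_ V. coeff (fst V) i"]) (use coordA in auto)
next
  case (coordB i)
  show ?case by (rule exI[of _ "\<lambda>_ V. coeff (snd V) i"]) (use coordB in auto)
next
  case (add f g)
  then obtain Df Dg where D: "\<forall>\<gamma> V. (\<forall>i\<le>n. ((\<lambda>t. coeff (fst (\<gamma> t)) i) has_field_derivative coeff (fst V) i) (at 0)
            \<and> ((\<lambda>t. coeff (snd (\<gamma> t)) i) has_field_derivative coeff (snd V) i) (at 0))
         \<longrightarrow> ((\<lambda>t. f (\<gamma> t)) has_field_derivative Df (\<gamma> 0) V) (at 0)"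
     "\<forall>\<gamma> V. (\<forall>i\<le>n. ((\<lambda>t. coeff (fst (\<gamma> t)) i) has_field_derivative coeff (fst V) i) (at 0)
            \<and> ((\<lambda>t. coeff (snd (\<gamma> t)) i) has_field_derivative coeff (snd V) i) (at 0))
         \<longrightarrow> ((\<lambda>t. g (\<gamma> t)) has_field_derivative Dg (\<gamma> 0) V) (at 0)" by blast
  show ?case
    apply (rule exI[of _ "\<lambda>P V. Df P V + Dg P V"], intro allI impI)
    apply (rule DERIV_add)
    using D by blast+
next
  case (mult f g)
  then obtain Df Dg where D: "\<forall>\<gamma> V. (\<forall>i\<le>n. ((\<lambda>t. coeff (fst (\<gamma> t)) i) has_field_derivative coeff (fst V) i) (at 0)
            \<and> ((\<lambda>t. coeff (snd (\<gamma> t)) i) has_field_derivative coeff (snd V) i) (at 0))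
         \<longrightarrow> ((\<lambda>t. f (\<gamma> t)) has_field_derivative Df (\<gamma> 0) V) (at 0)"
     "\<forall>\<gamma> V. (\<forall>i\<le>n. ((\<lambda>t. coeff (fst (\<gamma> t)) i) has_field_derivative coeff (fst V) i) (at 0)
            \<and> ((\<lambda>t. coeff (snd (\<gamma> t)) i) has_field_derivative coeff (snd V) i) (at 0))
         \<longrightarrow> ((\<lambda>t. g (\<gamma> t)) has_field_derivative Dg (\<gamma> 0) V) (at 0)" by blast
  show ?case
    apply (rule exI[of _ "\<lambda>P V. Df P V * g P + Dg P V * f P"], intro allI impI)
    apply (rule DERIV_mult)
    using D by blast+
qed

definition HD :: "(complex \<Rightarrow> complex poly) \<Rightarrow> complex poly \<Rightarrow> bool" where
  "HD H d \<longleftrightarrow> (\<forall>j. ((\<lambda>t. coeff (H t) j) has_field_derivative coeff d j) (at 0))"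

lemma HD_unique: "HD H d1 \<Longrightarrow> HD H d2 \<Longrightarrow> d1 = d2"
  unfolding HD_def by (rule poly_eqI) (meson DERIV_unique)

lemma HD_const: "HD (\<lambda>t. p) 0"
  unfolding HD_def by simp

lemma HD_add: "HD P d1 \<Longrightarrow> HD Q d2 \<Longrightarrow> HD (\<lambda>t. P t + Q t) (d1 + d2)"
  unfolding HD_def by (auto intro!: derivative_intros)

lemma HD_diff: "HD P d1 \<Longrightarrow> HD Q d2 \<Longrightarrow> HD (\<lambda>t. P t - Q t) (d1 - d2)"
  unfolding HD_def by (auto intro!: derivative_intros)

lemma HD_sum: "finite I \<Longrightarrow> (\<And>i. i \<in> I \<Longrightarrow> HD (P i) (d i)) \<Longrightarrow> HD (\<lambda>t. \<Sum>i\<in>I. P i t) (\<Sum>i\<in>I. d i)"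
  unfolding HD_def coeff_sum by (auto intro!: DERIV_sum)

lemma HD_line: "HD (\<lambda>t. p + smult t q) q"
  unfolding HD_def by (auto intro!: derivative_eq_intros)

lemma HD_smult:
  assumes "((\<lambda>t. h t) has_field_derivative dh) (at 0)" "HD P d"
  shows "HD (\<lambda>t. smult (h t) (P t)) (smult dh (P 0) + smult (h 0) d)"
  using assms unfolding HD_def by (auto intro!: derivative_eq_intros)

lemma HD_mult:
  assumes "HD P d1" "HD Q d2"
  shows "HD (\<lambda>t. P t * Q t) (d1 * Q 0 + P 0 * d2)"
  unfolding HD_def coeff_mult
proof
  fix j
  have "((\<lambda>t. \<Sum>i\<le>j. coeff (P t) i * coeff (Q t) (j - i)) has_field_derivative
     (\<Sum>i\<le>j. coeff (P 0) i * coeff d2 (j - i) + coeff d1 i * coeff (Q 0) (j - i))) (at 0)"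
    using assms unfolding HD_def by (auto intro!: DERIV_sum DERIV_mult')
  then show "((\<lambda>t. \<Sum>i\<le>j. coeff (P t) i * coeff (Q t) (j - i)) has_field_derivative
     coeff (d1 * Q 0 + P 0 * d2) j) (at 0)"
    by (simp add: coeff_mult sum.distrib add.commute)
qed

lemma HD_power:
  assumes "HD P d"
  shows "HD (\<lambda>t. P t ^ i) (of_nat i * P 0 ^ (i - 1) * d)"
proof (induction i)
  case 0
  then show ?case using HD_const[of 1] by simp
next
  case (Suc i)
  have "HD (\<lambda>t. P t * P t ^ i) (d * P 0 ^ i + P 0 * (of_nat i * P 0 ^ (i - 1) * d))"
    by (rule HD_mult[OF assms Suc])
  moreover have "d * P 0 ^ i + P 0 * (of_nat i * P 0 ^ (i - 1) * d)
      = of_nat (Suc i) * P 0 ^ (Suc i - 1) * d"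
    by (cases i) (auto simp: algebra_simps)
  ultimately show ?case by simp
qed

lemma HD_pcompose_fixed:
  assumes "HD V d"
  shows "HD (\<lambda>t. pcompose p (V t)) (pcompose (pderiv p) (V 0) * d)"
proof (induction p)
  case 0
  then show ?case using HD_const[of 0] by simp
next
  case (pCons a p)
  have "HD (\<lambda>t. [:a:] + V t * pcompose p (V t)) (0 + (d * pcompose p (V 0) + V 0 * (pcompose (pderiv p) (V 0) * d)))"
    by (intro HD_add HD_const HD_mult assms pCons)
  moreover have "0 + (d * pcompose p (V 0) + V 0 * (pcompose (pderiv p) (V 0) * d))
     = pcompose (pderiv (pCons a p)) (V 0) * d"
    by (simp add: pderiv_pCons pcompose_add pcompose_pCons algebra_simps)
  ultimately show ?case by (simp add: pcompose_pCons)
qed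

lemma HD_degree:
  assumes "HD H d" "\<And>t. degree (H t) \<le> D"
  shows "degree d \<le> D"
proof (rule degree_le, intro allI impI)
  fix j assume "D < j"
  then have "coeff (H t) j = 0" for t using assms(2) by (intro coeff_eq_0) (meson le_less_trans)
  then have "(\<lambda>t. coeff (H t) j) = (\<lambda>t. 0)" by auto
  then have "((\<lambda>t. 0) has_field_derivative coeff d j) (at 0)" using assms(1) unfolding HD_def by metis
  then show "coeff d j = 0" using DERIV_unique DERIV_const by blast
qed

lemma HD_pcompose:
  assumes "HD G dG" "HD V dV" "\<And>t. degree (G t) \<le> D"
  shows "HD (\<lambda>t. pcompose (G t) (V t)) (pcompose dG (V 0) + pcompose (pderiv (G 0)) (V 0) * dV)"
proof -
  have eq: "pcompose (G t) (V t) = (\<Sum>i\<le>D. smult (coeff (G t) i - coeff (G 0) i) (V t ^ i)) + pcompose (G 0) (V t)" for t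
  proof -
    have "pcompose (G t) (V t) = pcompose (G t - G 0) (V t) + pcompose (G 0) (V t)"
      by (simp add: pcompose_diff)
    also have "pcompose (G t - G 0) (V t) = (\<Sum>i\<le>D. smult (coeff (G t - G 0) i) (V t ^ i))"
      by (rule pcompose_sum_formula) (meson assms(3) degree_diff_le)
    finally show ?thesis by simp
  qed
  have c: "((\<lambda>t. coeff (G t) i - coeff (G 0) i) has_field_derivative coeff dG i) (at 0)" for i
    using assms(1) unfolding HD_def by (auto intro!: derivative_eq_intros)
  have "HD (\<lambda>t. (\<Sum>i\<le>D. smult (coeff (G t) i - coeff (G 0) i) (V t ^ i)) + pcompose (G 0) (V t))
     ((\<Sum>i\<le>D. smult (coeff dG i) (V 0 ^ i) + smult (coeff (G 0) i - coeff (G 0) i) (of_nat i * V 0 ^ (i - 1) * dV))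
      + pcompose (pderiv (G 0)) (V 0) * dV)"
    by (intro HD_add HD_sum HD_pcompose_fixed assms(2) HD_smult[OF c] HD_power finite_atMost)
  moreover have "(\<Sum>i\<le>D. smult (coeff dG i) (V 0 ^ i) + smult (coeff (G 0) i - coeff (G 0) i) (of_nat i * V 0 ^ (i - 1) * dV))
      = pcompose dG (V 0)"
    using pcompose_sum_formula[OF HD_degree[OF assms(1,3)]] by simp
  ultimately show ?thesis by (simp add: eq)
qed

lemma HD_exists:
  assumes "\<And>t. degree (H t) \<le> D" "\<And>j. j \<le> D \<Longrightarrow> \<exists>d. ((\<lambda>t. coeff (H t) j) has_field_derivative d) (at 0)"
  shows "\<exists>d. HD H d"
proof -
  obtain dd where dd: "\<And>j. j \<le> D \<Longrightarrow> ((\<lambda>t. coeff (H t) j) has_field_derivative dd j) (at 0)"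
    using assms(2) by metis
  define d where "d = (\<Sum>j\<le>D. monom (dd j) j)"
  have "HD H d" unfolding HD_def
  proof
    fix j
    show "((\<lambda>t. coeff (H t) j) has_field_derivative coeff d j) (at 0)"
    proof (cases "j \<le> D")
      case True
      then show ?thesis using dd[OF True] by (simp add: d_def coeff_sum)
    next
      case False
      then have "coeff (H t) j = 0" for t using assms(1) by (intro coeff_eq_0) (meson le_less_trans not_le)
      then have "(\<lambda>t. coeff (H t) j) = (\<lambda>t. 0)" by auto
      then show ?thesis using False by (simp add: d_def coeff_sum)
    qed
  qed
  then show ?thesis by blast
qed

lemma polyfun_pow: "f \<in> polyfun n \<Longrightarrow> (\<lambda>x. f x ^ e) \<in> polyfun n"
proof (induction e)
  case 0 then show ?case using polyfun.const[of 1 n] by simp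
next
  case (Suc e) then show ?case using polyfun.mult[of f n "\<lambda>x. f x ^ e"] by simp
qed

lemma polyfun_c: "(\<lambda>x. coeff (fst x) n) \<in> polyfun n"
  by (rule polyfun.coordA) simp

lemma polyfun_cmult: "f \<in> polyfun n \<Longrightarrow> (\<lambda>x. a * f x) \<in> polyfun n"
  using polyfun.mult[OF polyfun.const] by blast

definition Qc :: "nat \<Rightarrow> (complex poly \<times> complex poly \<Rightarrow> complex) \<Rightarrow> bool" where
  "Qc n h \<longleftrightarrow> (\<exists>e F. F \<in> polyfun n \<and>
     (\<forall>x\<in>An n. coeff (fst x) n \<noteq> 0 \<longrightarrow> coeff (fst x) n ^ e * h x = F x))"

lemma Qc_polyfun: "f \<in> polyfun n \<Longrightarrow> Qc n f"
  unfolding Qc_def by (rule exI[of _ 0]) auto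

lemma Qc_const: "Qc n (\<lambda>x. a)"
  by (rule Qc_polyfun) (rule polyfun.const)

lemma Qc_add: assumes "Qc n f" "Qc n g" shows "Qc n (\<lambda>x. f x + g x)"
proof -
  obtain e1 F1 e2 F2 where 1: "F1 \<in> polyfun n" "\<forall>x\<in>An n. coeff (fst x) n \<noteq> 0 \<longrightarrow> coeff (fst x) n ^ e1 * f x = F1 x"
    and 2: "F2 \<in> polyfun n" "\<forall>x\<in>An n. coeff (fst x) n \<noteq> 0 \<longrightarrow> coeff (fst x) n ^ e2 * g x = F2 x"
    using assms unfolding Qc_def by blast
  have P: "(\<lambda>x. coeff (fst x) n ^ e2 * F1 x + coeff (fst x) n ^ e1 * F2 x) \<in> polyfun n"
    by (intro polyfun.add polyfun.mult polyfun_pow polyfun_c 1 2)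
  show ?thesis unfolding Qc_def
  proof (intro exI conjI)
    show "\<forall>x\<in>An n. coeff (fst x) n \<noteq> 0 \<longrightarrow> coeff (fst x) n ^ (e1 + e2) * (f x + g x) =
       coeff (fst x) n ^ e2 * F1 x + coeff (fst x) n ^ e1 * F2 x"
    proof (intro ballI impI)
      fix x assume x: "x \<in> An n" "coeff (fst x) n \<noteq> 0"
      have "coeff (fst x) n ^ e2 * F1 x + coeff (fst x) n ^ e1 * F2 x =
         coeff (fst x) n ^ e2 * (coeff (fst x) n ^ e1 * f x) + coeff (fst x) n ^ e1 * (coeff (fst x) n ^ e2 * g x)"
        using 1 2 x by auto
      then show "coeff (fst x) n ^ (e1 + e2) * (f x + g x) =
       coeff (fst x) n ^ e2 * F1 x + coeff (fst x) n ^ e1 * F2 x" by (simp add: power_add algebra_simps)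
    qed
  qed (rule P)
qed

lemma Qc_mult: assumes "Qc n f" "Qc n g" shows "Qc n (\<lambda>x. f x * g x)"
proof -
  obtain e1 F1 e2 F2 where 1: "F1 \<in> polyfun n" "\<forall>x\<in>An n. coeff (fst x) n \<noteq> 0 \<longrightarrow> coeff (fst x) n ^ e1 * f x = F1 x"
    and 2: "F2 \<in> polyfun n" "\<forall>x\<in>An n. coeff (fst x) n \<noteq> 0 \<longrightarrow> coeff (fst x) n ^ e2 * g x = F2 x"
    using assms unfolding Qc_def by blast
  show ?thesis unfolding Qc_def
  proof (intro exI conjI)
    show "\<forall>x\<in>An n. coeff (fst x) n \<noteq> 0 \<longrightarrow> coeff (fst x) n ^ (e1 + e2) * (f x * g x) = F1 x * F2 x"
    proof (intro ballI impI)
      fix x assume "x \<in> An n" "coeff (fst x) n \<noteq> 0"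
      then have "F1 x * F2 x = (coeff (fst x) n ^ e1 * f x) * (coeff (fst x) n ^ e2 * g x)" using 1 2 by auto
      then show "coeff (fst x) n ^ (e1 + e2) * (f x * g x) = F1 x * F2 x" by (simp add: power_add algebra_simps)
    qed
  qed (intro polyfun.mult 1 2)
qed

lemma Qc_cmult: "Qc n f \<Longrightarrow> Qc n (\<lambda>x. a * f x)"
  by (rule Qc_mult[OF Qc_const])

lemma Qc_diff: "Qc n f \<Longrightarrow> Qc n g \<Longrightarrow> Qc n (\<lambda>x. f x - g x)"
  using Qc_add[of n f "\<lambda>x. (-1) * g x"] Qc_cmult[of n g "-1"] by simp

lemma Qc_inv_c: "Qc n (\<lambda>x. 1 / coeff (fst x) n)"
  unfolding Qc_def by (rule exI[of _ 1], rule exI[of _ "\<lambda>x. 1"]) (auto intro: polyfun.const)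

lemma Qc_sum: "finite I \<Longrightarrow> (\<And>i. i \<in> I \<Longrightarrow> Qc n (f i)) \<Longrightarrow> Qc n (\<lambda>x. \<Sum>i\<in>I. f i x)"
  by (induction I rule: finite_induct) (auto intro: Qc_add Qc_const)

lemma Qc_fst: "Qc n (\<lambda>x. coeff (fst x) i)"
proof (cases "i \<le> n")
  case True then show ?thesis by (intro Qc_polyfun polyfun.coordA)
next
  case False
  then show ?thesis unfolding Qc_def
    by (intro exI[of _ 0] exI[of _ "\<lambda>x. 0"]) (auto simp: An_def coeff_eq_0 intro: polyfun.const)
qed

lemma Qc_snd: "Qc n (\<lambda>x. coeff (snd x) i)"
proof (cases "i \<le> n")
  case True then show ?thesis by (intro Qc_polyfun polyfun.coordB)
next
  case False
  then show ?thesis unfolding Qc_def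
    by (intro exI[of _ 0] exI[of _ "\<lambda>x. 0"]) (auto simp: An_def coeff_eq_0 intro: polyfun.const)
qed

definition QP :: "nat \<Rightarrow> (complex poly \<times> complex poly \<Rightarrow> complex poly) \<Rightarrow> bool" where
  "QP n P \<longleftrightarrow> (\<forall>j. Qc n (\<lambda>x. coeff (P x) j))"

lemma QP_const: "QP n (\<lambda>x. p)"
  unfolding QP_def by (simp add: Qc_const)

lemma QP_add: "QP n P \<Longrightarrow> QP n Q \<Longrightarrow> QP n (\<lambda>x. P x + Q x)"
  unfolding QP_def by (simp add: Qc_add)

lemma QP_diff: "QP n P \<Longrightarrow> QP n Q \<Longrightarrow> QP n (\<lambda>x. P x - Q x)"
  unfolding QP_def by (simp add: Qc_diff)

lemma QP_mult: "QP n P \<Longrightarrow> QP n Q \<Longrightarrow> QP n (\<lambda>x. P x * Q x)"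
  unfolding QP_def coeff_mult by (auto intro!: Qc_sum Qc_mult)

lemma QP_smult: "Qc n h \<Longrightarrow> QP n P \<Longrightarrow> QP n (\<lambda>x. smult (h x) (P x))"
  unfolding QP_def by (simp add: Qc_mult)

lemma QP_monom: "Qc n h \<Longrightarrow> QP n (\<lambda>x. monom (h x) d)"
  unfolding QP_def proof
  fix j assume "Qc n h"
  then show "Qc n (\<lambda>x. coeff (monom (h x) d) j)" by (cases "d = j") (auto simp: Qc_const)
qed

lemma QP_power: "QP n P \<Longrightarrow> QP n (\<lambda>x. P x ^ i)"
  by (induction i) (auto intro: QP_mult QP_const)

lemma QP_sum: "finite I \<Longrightarrow> (\<And>i. i \<in> I \<Longrightarrow> QP n (P i)) \<Longrightarrow> QP n (\<lambda>x. \<Sum>i\<in>I. P i x)"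
  unfolding QP_def coeff_sum by (auto intro!: Qc_sum)

lemma QP_prim_fst: "QP n (\<lambda>x. prim (fst x))"
  unfolding QP_def coeff_prim proof
  fix j
  show "Qc n (\<lambda>x. if j = 0 then 0 else coeff (fst x) (j - 1) / of_nat j)"
  proof (cases "j = 0")
    case False
    then show ?thesis using Qc_cmult[OF Qc_fst[of n "j - 1"], of "1 / of_nat j"] by simp
  qed (simp add: Qc_const)
qed

lemma QP_prim_snd: "QP n (\<lambda>x. prim (snd x))"
  unfolding QP_def coeff_prim proof
  fix j
  show "Qc n (\<lambda>x. if j = 0 then 0 else coeff (snd x) (j - 1) / of_nat j)"
  proof (cases "j = 0")
    case False
    then show ?thesis using Qc_cmult[OF Qc_snd[of n "j - 1"], of "1 / of_nat j"] by simp
  qed (simp add: Qc_const)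
qed

lemma Qc_coeff: "QP n P \<Longrightarrow> Qc n (\<lambda>x. coeff (P x) j)"
  unfolding QP_def by blast

lemma Qc_poly1: "QP n P \<Longrightarrow> (\<And>x. degree (P x) \<le> D) \<Longrightarrow> Qc n (\<lambda>x. poly (P x) 1)"
proof -
  assume a: "QP n P" "\<And>x. degree (P x) \<le> D"
  have "poly (P x) 1 = (\<Sum>i\<le>D. coeff (P x) i)" for x
  proof -
    have "poly (P x) 1 = poly (\<Sum>i\<le>D. monom (coeff (P x) i) i) 1"
      using poly_as_sum_of_monoms'[OF a(2)] by simp
    then show ?thesis by (simp add: poly_sum poly_monom)
  qed
  then show ?thesis using a by (auto intro!: Qc_sum Qc_coeff)
qed

fun rv :: "nat \<Rightarrow> nat \<Rightarrow> complex poly \<Rightarrow> nat \<Rightarrow> complex poly" where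
  "rv k m A 0 = monom 1 k"
| "rv k m A (Suc j) = rv k m A j + monom ((coeff A (m*k - Suc j) / coeff A (m*k)
      - coeff (rv k m A j ^ m) (m*k - Suc j)) / of_nat m) (k - Suc j)"

fun res :: "nat \<Rightarrow> nat \<Rightarrow> complex poly \<Rightarrow> complex poly \<Rightarrow> nat \<Rightarrow> complex poly" where
  "res k m V B 0 = B"
| "res k m V B (Suc s) = res k m V B s - smult (coeff (res k m V B s) ((m - s) * k)) (V ^ (m - s))"

definition gpoly :: "nat \<Rightarrow> nat \<Rightarrow> complex poly \<Rightarrow> complex poly \<Rightarrow> nat \<Rightarrow> complex poly" where
  "gpoly k m V B s = (\<Sum>s'<s. monom (coeff (res k m V B s') ((m - s') * k)) (m - s'))"

lemma res_gpoly: "res k m V B s = B - pcompose (gpoly k m V B s) V"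
  by (induction s) (auto simp: gpoly_def pcompose_add pcompose_monom)

lemma degree_gpoly: "degree (gpoly k m V B s) \<le> m"
  unfolding gpoly_def by (rule degree_sum_le) (auto simp: degree_monom_le intro: order.trans[OF degree_monom_le])

lemma res_0: "res k m V 0 s = 0"
  by (induction s) auto

lemma gpoly_0: "gpoly k m V 0 s = 0"
  by (simp add: gpoly_def res_0)

lemma degree_rv: "degree (rv k m A j) \<le> k"
  by (induction j) (auto intro!: degree_add_le order.trans[OF degree_monom_le])

lemma coeff0_rv: "j < k \<Longrightarrow> coeff (rv k m A j) 0 = 0"
  by (induction j) auto

lemma QP_rv:
  assumes "QP n A" "Qc n (\<lambda>x. 1 / coeff (A x) (m*k))"
  shows "QP n (\<lambda>x. rv k m (A x) j)"
proof (induction j)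
  case 0 then show ?case by (simp add: QP_const)
next
  case (Suc j)
  have "Qc n (\<lambda>x. (coeff (A x) (m*k - Suc j) * (1 / coeff (A x) (m*k))
      - coeff (rv k m (A x) j ^ m) (m*k - Suc j)) * (1 / of_nat m))"
    by (intro Qc_mult Qc_diff Qc_coeff assms QP_power Suc Qc_const)
  then show ?case
    by (simp only: rv.simps) (intro QP_add Suc QP_monom, simp)
qed

lemma QP_res:
  assumes "QP n V" "QP n B"
  shows "QP n (\<lambda>x. res k m (V x) (B x) s)"
  by (induction s) (auto intro!: QP_diff QP_smult Qc_coeff QP_power assms)

lemma QP_gpoly:
  assumes "QP n V" "QP n B"
  shows "QP n (\<lambda>x. gpoly k m (V x) (B x) s)"
  unfolding gpoly_def by (auto intro!: QP_sum QP_monom Qc_coeff QP_res assms)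

lemma res_zero:
  assumes "degree V0 = k" "coeff V0 k = 1" "1 \<le> k" "degree H \<le> m"
  shows "res k m V0 (pcompose H V0) (Suc m) = 0"
proof -
  have "s \<le> Suc m \<Longrightarrow> res k m V0 (pcompose H V0) s = pcompose (\<Sum>i<Suc m - s. monom (coeff H i) i) V0" for s
  proof (induction s)
    case 0
    then show ?case using poly_as_sum_of_monoms'[OF assms(4)] by (simp add: lessThan_Suc_atMost)
  next
    case (Suc s)
    then have sm: "s \<le> m" by simp
    define T' where "T' = (\<Sum>i<m - s. monom (coeff H i) i)"
    have sp: "Suc m - s = Suc (m - s)" using sm by simp
    have T: "(\<Sum>i<Suc m - s. monom (coeff H i) i) = monom (coeff H (m - s)) (m - s) + T'"
      unfolding sp T'_def by (simp add: add.commute)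
    have pc: "pcompose (\<Sum>i<Suc m - s. monom (coeff H i) i) V0 = smult (coeff H (m - s)) (V0 ^ (m - s)) + pcompose T' V0"
      unfolding T by (simp add: pcompose_add pcompose_monom)
    have "V0 \<noteq> 0" using assms(2) by auto
    then have degV: "degree (V0 ^ (m - s)) = (m - s) * k" by (simp add: degree_power_eq assms(1))
    have lc: "coeff (V0 ^ (m - s)) ((m - s) * k) = 1"
      using lead_coeff_power[of V0 "m - s"] degV assms(1,2) by simp
    have c0: "coeff (pcompose T' V0) ((m - s) * k) = 0"
    proof (cases "m - s = 0")
      case True then show ?thesis by (simp add: T'_def)
    next
      case False
      have "degree T' \<le> m - s - 1" unfolding T'_def
        by (rule degree_sum_le) (auto intro: order.trans[OF degree_monom_le])
      then have "degree (pcompose T' V0) \<le> (m - s - 1) * k"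
        using degree_pcompose[of T' V0] assms(1) by (simp add: mult_le_mono1)
      moreover have "(m - s - 1) * k < (m - s) * k" using False assms(3) by simp
      ultimately show ?thesis by (intro coeff_eq_0) (meson le_less_trans)
    qed
    have "res k m V0 (pcompose H V0) (Suc s) = pcompose T' V0"
      using Suc.IH sm by (simp add: pc coeff_add lc c0)
    moreover have "Suc m - Suc s = m - s" by simp
    ultimately show ?case by (simp add: T'_def)
  qed
  from this[of "Suc m"] show ?thesis by simp
qed

lemma deg_add_bound:
  fixes X Y :: "complex poly"
  assumes "X = 0 \<or> degree X + c \<le> B" "Y = 0 \<or> degree Y + c \<le> B"
  shows "X + Y = 0 \<or> degree (X + Y) + c \<le> B"
proof (cases "X = 0")
  case True then show ?thesis using assms(2) by simp
next
  case False
  show ?thesis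
  proof (cases "Y = 0")
    case True then show ?thesis using assms(1) by simp
  next
    case False
    then have "degree X + c \<le> B" "degree Y + c \<le> B" using assms \<open>X \<noteq> 0\<close> by auto
    moreover have "degree (X + Y) \<le> max (degree X) (degree Y)" by (rule degree_add_le_max)
    ultimately show ?thesis by linarith
  qed
qed

lemma binom_approx:
  fixes T r :: "complex poly"
  assumes "degree T \<le> k" "degree r \<le> d" "d \<le> k"
  shows "(T + r) ^ m - T ^ m - of_nat m * (T ^ (m - 1) * r) = 0 \<or>
     degree ((T + r) ^ m - T ^ m - of_nat m * (T ^ (m - 1) * r)) + 2 * (k - d) \<le> m * k"
proof (induction m)
  case 0 then show ?case by simp
next
  case (Suc m)
  define E where "E = (T + r) ^ m - T ^ m - of_nat m * (T ^ (m - 1) * r)"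
  have id: "(T + r) ^ Suc m - T ^ Suc m - of_nat (Suc m) * (T ^ (Suc m - 1) * r)
      = (T + r) * E + of_nat m * (T ^ (m - 1) * r ^ 2)"
  proof (cases m)
    case 0 then show ?thesis by (simp add: E_def)
  next
    case (Suc m')
    then show ?thesis by (simp add: E_def algebra_simps power2_eq_square)
  qed
  have d1: "(T + r) * E = 0 \<or> degree ((T + r) * E) + 2 * (k - d) \<le> Suc m * k"
  proof (cases "E = 0")
    case False
    then have "degree E + 2 * (k - d) \<le> m * k" using Suc.IH E_def by simp
    moreover have "degree ((T + r) * E) \<le> degree (T + r) + degree E" by (rule degree_mult_le)
    moreover have "degree (T + r) \<le> k" using assms by (meson degree_add_le le_trans)
    ultimately show ?thesis by simp
  qed simp
  have d2: "degree (of_nat m * (T ^ (m - 1) * r ^ 2)) + 2 * (k - d) \<le> Suc m * k \<or> m = 0"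
  proof (cases "m = 0")
    case False
    have "degree (of_nat m * (T ^ (m - 1) * r ^ 2)) \<le> degree (T ^ (m - 1)) + degree (r ^ 2)"
      by (simp add: of_nat_poly degree_mult_le)
    also have "\<dots> \<le> (m - 1) * k + 2 * d"
      using assms by (intro add_mono) (auto intro: order.trans[OF degree_power_le] mult_le_mono)
    finally show ?thesis using False assms(3) by (cases m) (auto simp: algebra_simps)
  qed simp
  have d2': "of_nat m * (T ^ (m - 1) * r ^ 2) = 0 \<or> degree (of_nat m * (T ^ (m - 1) * r ^ 2)) + 2 * (k - d) \<le> Suc m * k"
    using d2 by auto
  show ?case unfolding id by (rule deg_add_bound[OF d1 d2'])
qed

lemma coeff_mult_top:
  fixes p q :: "complex poly"
  assumes "degree p \<le> a" "degree q \<le> b"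
  shows "coeff (p * q) (a + b) = coeff p a * coeff q b"
proof -
  have "coeff (p * q) (a + b) = (\<Sum>i\<le>a + b. if i = a then coeff p a * coeff q b else 0)"
    unfolding coeff_mult
  proof (rule sum.cong)
    fix i assume "i \<in> {..a + b}"
    show "coeff p i * coeff q (a + b - i) = (if i = a then coeff p a * coeff q b else 0)"
    proof (cases "i < a")
      case True then have "coeff q (a + b - i) = 0" using assms(2) by (intro coeff_eq_0) linarith
      then show ?thesis using True by simp
    next
      case False
      then show ?thesis using assms(1) by (cases "i = a") (auto simp: coeff_eq_0)
    qed
  qed simp
  then show ?thesis by simp
qed

lemma coeff_top_sum:
  assumes "j < k"
  shows "coeff (\<Sum>i\<in>{1..j}. monom (f i) (k - i)) l = (if l < k \<and> k - j \<le> l then f (k - l) else 0)"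
proof -
  have "coeff (\<Sum>i\<in>{1..j}. monom (f i) (k - i)) l = (\<Sum>i\<in>{1..j}. if i = k - l \<and> l < k then f (k - l) else 0)"
    unfolding coeff_sum by (rule sum.cong) (use assms in auto)
  also have "\<dots> = (if l < k \<and> k - j \<le> l then f (k - l) else 0)"
  proof (cases "l < k")
    case True
    then have "(\<Sum>i\<in>{1..j}. if i = k - l \<and> l < k then f (k - l) else 0) = (\<Sum>i\<in>{1..j}. if i = k - l then f (k - l) else 0)"
      by simp
    also have "\<dots> = (if k - l \<in> {1..j} then f (k - l) else 0)" by (rule sum.delta) simp
    finally show ?thesis using True assms by auto
  qed simp
  finally show ?thesis .
qed

lemma rv_correct:
  assumes k1: "1 \<le> k" and m1: "1 \<le> m" and dV: "degree V0 = k" and lV: "coeff V0 k = 1"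
    and dG: "degree G = m" and A: "A = pcompose G V0"
  shows "j < k \<Longrightarrow> rv k m A j = monom 1 k + (\<Sum>i\<in>{1..j}. monom (coeff V0 (k - i)) (k - i))"
proof (induction j)
  case 0 then show ?case by simp
next
  case (Suc j)
  then have jk: "Suc j < k" by simp
  define T where "T = monom 1 k + (\<Sum>i\<in>{1..j}. monom (coeff V0 (k - i)) (k - i))"
  have IH: "rv k m A j = T" using Suc jk unfolding T_def by simp
  define r where "r = V0 - T"
  have cT: "coeff T l = (if l = k then 1 else if l < k \<and> k - j \<le> l then coeff V0 l else 0)" for l
  proof -
    have "coeff (\<Sum>i\<in>{1..j}. monom (coeff V0 (k - i)) (k - i)) l = (if l < k \<and> k - j \<le> l then coeff V0 (k - (k - l)) else 0)"
      by (rule coeff_top_sum) (use jk in simp)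
    then show ?thesis unfolding T_def coeff_add by auto
  qed
  have degT: "degree T \<le> k" by (rule degree_le) (auto simp: cT)
  have lcT: "coeff T k = 1" by (simp add: cT)
  have Tnz: "T \<noteq> 0" using lcT by auto
  have degT': "degree T = k" using degT lcT by (metis le_degree antisym one_neq_zero)
  have degr: "degree r \<le> k - Suc j"
  proof (rule degree_le, intro allI impI)
    fix l assume l: "k - Suc j < l"
    show "coeff r l = 0"
    proof (cases "k < l")
      case True then show ?thesis using dV degT unfolding r_def by (auto simp: coeff_eq_0)
    next
      case False then show ?thesis using l lV unfolding r_def by (auto simp: cT)
    qed
  qed
  have cr: "coeff r (k - Suc j) = coeff V0 (k - Suc j)"
    unfolding r_def using jk by (auto simp: cT)
  have V0: "V0 = T + r" unfolding r_def by simp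
  define N where "N = m * k"
  have Ni: "N - Suc j = (m - 1) * k + (k - Suc j)" using m1 jk unfolding N_def
    by (cases m) (auto simp: algebra_simps)
  have E: "coeff ((T + r) ^ m - T ^ m - of_nat m * (T ^ (m - 1) * r)) (N - Suc j) = 0"
  proof -
    have "(T + r) ^ m - T ^ m - of_nat m * (T ^ (m - 1) * r) = 0 \<or>
     degree ((T + r) ^ m - T ^ m - of_nat m * (T ^ (m - 1) * r)) + 2 * (k - (k - Suc j)) \<le> m * k"
      using binom_approx[OF degT degr, of m] by simp
    then show ?thesis
    proof
      assume "degree ((T + r) ^ m - T ^ m - of_nat m * (T ^ (m - 1) * r)) + 2 * (k - (k - Suc j)) \<le> m * k"
      then have "degree ((T + r) ^ m - T ^ m - of_nat m * (T ^ (m - 1) * r)) < N - Suc j"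
        using jk unfolding N_def by linarith
      then show ?thesis by (intro coeff_eq_0) 
    qed simp
  qed
  have degTp: "degree (T ^ (m - 1)) = (m - 1) * k" using Tnz by (simp add: degree_power_eq degT')
  have lcTp: "coeff (T ^ (m - 1)) ((m - 1) * k) = 1"
    using lead_coeff_power[of T "m - 1"] degTp degT' lcT by simp
  have c1: "coeff (T ^ (m - 1) * r) (N - Suc j) = coeff V0 (k - Suc j)"
    unfolding Ni by (subst coeff_mult_top[OF _ degr]) (use degTp lcTp cr in simp_all)
  have cV: "coeff (V0 ^ m) (N - Suc j) = coeff (T ^ m) (N - Suc j) + of_nat m * coeff V0 (k - Suc j)"
  proof -
    have E': "coeff (V0 ^ m - T ^ m - of_nat m * (T ^ (m - 1) * r)) (N - Suc j) = 0"
      using E V0 by simp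
    have "coeff (of_nat m * (T ^ (m - 1) * r)) (N - Suc j) = of_nat m * coeff V0 (k - Suc j)"
      using c1 by (simp add: of_nat_poly)
    then show ?thesis using E' by (simp only: coeff_diff) (simp add: algebra_simps)
  qed
  define g where "g = lead_coeff G"
  have Gnz: "G \<noteq> 0" using dG m1 by auto
  have gnz: "g \<noteq> 0" using Gnz g_def by simp
  have V0nz: "V0 \<noteq> 0" using lV by auto
  have A2: "A = smult g (V0 ^ m) + pcompose (G - monom g m) V0"
    by (simp add: A pcompose_diff pcompose_monom)
  have dG2: "degree (G - monom g m) \<le> m - 1"
  proof (rule degree_le, intro allI impI)
    fix l assume "m - 1 < l"
    then show "coeff (G - monom g m) l = 0" using dG m1 unfolding g_def
      by (cases "l = m") (auto simp: coeff_eq_0)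
  qed
  have dP2: "degree (pcompose (G - monom g m) V0) \<le> (m - 1) * k"
    using degree_pcompose[of "G - monom g m" V0] dG2 dV by (simp add: mult_le_mono1)
  have cA1: "coeff A (N - Suc j) = g * coeff (V0 ^ m) (N - Suc j)"
  proof -
    have "(m - 1) * k < N - Suc j" using Ni jk by linarith
    then have "coeff (pcompose (G - monom g m) V0) (N - Suc j) = 0" using dP2 by (intro coeff_eq_0) linarith
    then show ?thesis by (simp add: A2)
  qed
  have cAN: "coeff A N = g"
  proof -
    have "degree A = N" unfolding A N_def using degree_pcompose[of G V0] dG dV by (simp add: mult.commute)
    moreover have "lead_coeff A = g" unfolding A g_def using lead_coeff_comp[of V0 G] dV k1 lV by simp
    ultimately show ?thesis by simp
  qed
  have m0: "(of_nat m :: complex) \<noteq> 0" using m1 by simp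
  have "(coeff A (m*k - Suc j) / coeff A (m*k) - coeff (rv k m A j ^ m) (m*k - Suc j)) / of_nat m = coeff V0 (k - Suc j)"
    using gnz m0 unfolding N_def[symmetric] IH cAN cA1 cV by (simp add: field_simps)
  then show ?case using IH unfolding T_def by (simp add: rv.simps)
qed

lemma rv_final:
  assumes k1: "1 \<le> k" and m1: "1 \<le> m" and dV: "degree V0 = k" and lV: "coeff V0 k = 1"
    and c0: "coeff V0 0 = 0" and dG: "degree G = m" and A: "A = pcompose G V0"
  shows "rv k m A (k - 1) = V0"
proof -
  have "rv k m A (k - 1) = monom 1 k + (\<Sum>i\<in>{1..k - 1}. monom (coeff V0 (k - i)) (k - i))"
    using rv_correct[OF assms(1-4,6,7)] k1 by simp
  also have "\<dots> = V0"
  proof (rule poly_eqI)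
    fix l
    show "coeff (monom 1 k + (\<Sum>i\<in>{1..k - 1}. monom (coeff V0 (k - i)) (k - i))) l = coeff V0 l"
    proof -
      have "coeff (\<Sum>i\<in>{1..k - 1}. monom (coeff V0 (k - i)) (k - i)) l = (if l < k \<and> k - (k - 1) \<le> l then coeff V0 (k - (k - l)) else 0)"
        by (rule coeff_top_sum) (use k1 in simp)
      then show ?thesis using k1 c0 lV dV by (cases "l = 0") (auto simp: coeff_eq_0)
    qed
  qed
  finally show ?thesis .
qed

definition Sset :: "nat \<Rightarrow> nat \<Rightarrow> (complex poly \<times> complex poly) set" where
  "Sset n k = {(a, b) \<in> An n. \<exists>At Bt W.
      degree At = (n + 1) div k \<and> degree Bt = (n + 1) div k \<and> degree W = k \<and>
      poly W 0 = poly W 1 \<and> prim a = pcompose At W \<and> prim b = pcompose Bt W}"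

lemma U_Sset: "U_set n k = zariski_closure n (Sset n k)"
  unfolding U_set_def Sset_def ..

lemma normalize:
  fixes W :: "complex poly"
  assumes "degree W = k" "1 \<le> k"
  shows "degree (smult (1 / lead_coeff W) (W - [:poly W 0:])) = k"
    "coeff (smult (1 / lead_coeff W) (W - [:poly W 0:])) k = 1"
    "coeff (smult (1 / lead_coeff W) (W - [:poly W 0:])) 0 = 0"
    "poly (smult (1 / lead_coeff W) (W - [:poly W 0:])) 1 = (poly W 1 - poly W 0) / lead_coeff W"
    "pcompose P W = pcompose (pcompose P [:poly W 0, lead_coeff W:]) (smult (1 / lead_coeff W) (W - [:poly W 0:]))"
    "degree (pcompose P [:poly W 0, lead_coeff W:]) = degree P"
proof -
  have Wnz: "W \<noteq> 0" using assms by auto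
  then have l: "lead_coeff W \<noteq> 0" by simp
  have dd: "degree (W - [:poly W 0:]) = k"
    using assms degree_add_eq_left[of "- [:poly W 0:]" W] by (simp add: diff_conv_add_uminus del: add_uminus_conv_diff)
  show "degree (smult (1 / lead_coeff W) (W - [:poly W 0:])) = k" using l dd by simp
  show "coeff (smult (1 / lead_coeff W) (W - [:poly W 0:])) k = 1" using l assms by (cases k) (auto simp: coeff_pCons)
  show "coeff (smult (1 / lead_coeff W) (W - [:poly W 0:])) 0 = 0" by (simp add: poly_0_coeff_0)
  show "poly (smult (1 / lead_coeff W) (W - [:poly W 0:])) 1 = (poly W 1 - poly W 0) / lead_coeff W" by simp
  have "pcompose [:poly W 0, lead_coeff W:] (smult (1 / lead_coeff W) (W - [:poly W 0:])) = W"
    using l by (simp add: pcompose_pCons smult_diff_right)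
  then show "pcompose P W = pcompose (pcompose P [:poly W 0, lead_coeff W:]) (smult (1 / lead_coeff W) (W - [:poly W 0:]))"
    by (metis pcompose_assoc)
  show "degree (pcompose P [:poly W 0, lead_coeff W:]) = degree P"
    using l by (simp add: degree_pcompose)
qed

lemma S_struct:
  assumes "(a, b) \<in> Sset n k" "1 < k" "k dvd n + 1"
  shows "\<exists>V0 G H. degree V0 = k \<and> coeff V0 k = 1 \<and> coeff V0 0 = 0 \<and> poly V0 1 = 0 \<and>
      degree G = (n + 1) div k \<and> degree H = (n + 1) div k \<and> prim a = pcompose G V0 \<and> prim b = pcompose H V0"
proof -
  obtain At Bt W where h: "degree At = (n + 1) div k" "degree Bt = (n + 1) div k" "degree W = k"
      "poly W 0 = poly W 1" "prim a = pcompose At W" "prim b = pcompose Bt W"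
    using assms(1) unfolding Sset_def by blast
  have k1: "1 \<le> k" using assms by simp
  note N = normalize[OF h(3) k1]
  show ?thesis
    apply (rule exI[of _ "smult (1 / lead_coeff W) (W - [:poly W 0:])"])
    apply (rule exI[of _ "pcompose At [:poly W 0, lead_coeff W:]"])
    apply (rule exI[of _ "pcompose Bt [:poly W 0, lead_coeff W:]"])
    using N(1-4) N(5)[of At] N(6)[of At] N(5)[of Bt] N(6)[of Bt] h by simp
qed

lemma m_pos: fixes n k :: nat assumes "1 < k" "k dvd n + 1" shows "(n + 1) div k \<ge> 1"
proof -
  have "k \<le> n + 1" using dvd_imp_le[OF assms(2)] by simp
  then show ?thesis using assms div_greater_zero_iff[of "n + 1" k] by linarith
qed

lemma mk_eq: fixes n k :: nat assumes "k dvd n + 1" shows "(n + 1) div k * k = n + 1"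
  using assms by simp

lemma S_c:
  assumes "(a, b) \<in> Sset n k" "1 < k" "k dvd n + 1"
  shows "coeff a n \<noteq> 0"
proof -
  obtain V0 G H where h: "degree V0 = k" "coeff V0 k = 1" "degree G = (n + 1) div k" "prim a = pcompose G V0"
    using S_struct[OF assms] by blast
  have m1: "(n + 1) div k \<ge> 1" using m_pos assms by blast
  have "G \<noteq> 0" using h(3) m1 by auto
  have "degree (prim a) = n + 1"
    using h assms by (simp add: degree_pcompose)
  moreover have "lead_coeff (prim a) = lead_coeff G" using h lead_coeff_comp[of V0 G] assms by simp
  moreover have "lead_coeff G \<noteq> 0" using \<open>G \<noteq> 0\<close> by simp
  ultimately have "coeff (prim a) (n + 1) \<noteq> 0" by simp
  then show ?thesis by (simp add: coeff_prim)
qed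

lemma S_An: "Sset n k \<subseteq> An n"
  unfolding Sset_def by auto

lemma closure_An: "zariski_closure n S \<subseteq> An n"
  unfolding zariski_closure_def by auto

lemma S_sub_closure: "S \<subseteq> An n \<Longrightarrow> S \<subseteq> zariski_closure n S"
  unfolding zariski_closure_def vanishing_ideal_def by auto

lemma vanish_closure: "f \<in> vanishing_ideal n S \<Longrightarrow> f \<in> vanishing_ideal n (zariski_closure n S)"
  unfolding zariski_closure_def vanishing_ideal_def by auto

lemma line_An:
  assumes "(a, b) \<in> An n" "(p, q) \<in> An n"
  shows "(a + smult t p, b + smult t q) \<in> An n"
  using assms unfolding An_def by (auto intro: order.trans[OF degree_add_le] order.trans[OF degree_smult_le])

lemma line_deriv_polyfun:
  assumes "F \<in> polyfun n"
  shows "\<exists>D. ((\<lambda>t. F (a + smult t p, b + smult t q)) has_field_derivative D) (at 0)"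
proof -
  obtain Df where D: "\<forall>\<gamma> V. (\<forall>i\<le>n. ((\<lambda>t. coeff (fst (\<gamma> t)) i) has_field_derivative coeff (fst V) i) (at 0)
            \<and> ((\<lambda>t. coeff (snd (\<gamma> t)) i) has_field_derivative coeff (snd V) i) (at 0))
         \<longrightarrow> ((\<lambda>t. F (\<gamma> t)) has_field_derivative Df (\<gamma> 0) V) (at 0)"
    using polyfun_deriv[OF assms] by blast
  have "((\<lambda>t. coeff a i + t * coeff p i) has_field_derivative coeff p i) (at 0)"
     "((\<lambda>t. coeff b i + t * coeff q i) has_field_derivative coeff q i) (at 0)" for i
    by (auto intro!: derivative_eq_intros)
  then have "((\<lambda>t. F (a + smult t p, b + smult t q)) has_field_derivative Df (a, b) (p, q)) (at 0)"
    using D[rule_format, of "\<lambda>t. (a + smult t p, b + smult t q)" "(p, q)"]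
    by simp
  then show ?thesis by blast
qed

lemma c_eventually:
  assumes "(\<alpha>::complex) \<noteq> 0"
  shows "eventually (\<lambda>t. \<alpha> + t * \<beta> \<noteq> 0) (nhds 0)"
proof -
  have "((\<lambda>t. \<alpha> + t * \<beta>) \<longlongrightarrow> \<alpha>) (at (0::complex))"
    by (rule tendsto_eq_intros | simp)+
  then have "eventually (\<lambda>t. \<alpha> + t * \<beta> \<noteq> 0) (at 0)"
    using tendsto_imp_eventually_ne assms by blast
  then show ?thesis using assms by (simp add: eventually_nhds_conv_at)
qed

lemma Qc_line_eq:
  assumes "Qc n h" "(a, b) \<in> An n" "(p, q) \<in> An n" "coeff a n \<noteq> 0"
  obtains e F where "F \<in> polyfun n" "\<forall>x\<in>An n. coeff (fst x) n \<noteq> 0 \<longrightarrow> coeff (fst x) n ^ e * h x = F x"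
    "eventually (\<lambda>t. h (a + smult t p, b + smult t q) = F (a + smult t p, b + smult t q) / (coeff a n + t * coeff p n) ^ e) (nhds 0)"
proof -
  obtain e F where F: "F \<in> polyfun n" "\<forall>x\<in>An n. coeff (fst x) n \<noteq> 0 \<longrightarrow> coeff (fst x) n ^ e * h x = F x"
    using assms(1) unfolding Qc_def by blast
  have "eventually (\<lambda>t. h (a + smult t p, b + smult t q) = F (a + smult t p, b + smult t q) / (coeff a n + t * coeff p n) ^ e) (nhds 0)"
    using c_eventually[OF assms(4), of "coeff p n"]
  proof (rule eventually_mono)
    fix t assume t: "coeff a n + t * coeff p n \<noteq> 0"
    have "(a + smult t p, b + smult t q) \<in> An n" by (rule line_An[OF assms(2,3)])
    then have "(coeff a n + t * coeff p n) ^ e * h (a + smult t p, b + smult t q) = F (a + smult t p, b + smult t q)"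
      using F(2) t by auto
    then show "h (a + smult t p, b + smult t q) = F (a + smult t p, b + smult t q) / (coeff a n + t * coeff p n) ^ e"
      using t by (simp add: field_simps)
  qed
  then show ?thesis using F that by blast
qed

lemma Qc_deriv:
  assumes "Qc n h" "(a, b) \<in> An n" "(p, q) \<in> An n" "coeff a n \<noteq> 0"
  shows "\<exists>D. ((\<lambda>t. h (a + smult t p, b + smult t q)) has_field_derivative D) (at 0)"
proof -
  obtain e F where F: "F \<in> polyfun n"
    "eventually (\<lambda>t. h (a + smult t p, b + smult t q) = F (a + smult t p, b + smult t q) / (coeff a n + t * coeff p n) ^ e) (nhds 0)"
    using Qc_line_eq[OF assms] by blast
  obtain DF where DF: "((\<lambda>t. F (a + smult t p, b + smult t q)) has_field_derivative DF) (at 0)"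
    using line_deriv_polyfun[OF F(1)] by blast
  have "((\<lambda>t. F (a + smult t p, b + smult t q) / (coeff a n + t * coeff p n) ^ e) has_field_derivative
     (DF * (coeff a n + 0 * coeff p n) ^ e - F (a + smult 0 p, b + smult 0 q) * (of_nat e * (coeff p n * (coeff a n + 0 * coeff p n) ^ (e - 1)))) /
      ((coeff a n + 0 * coeff p n) ^ e * (coeff a n + 0 * coeff p n) ^ e)) (at 0)"
    by (rule DERIV_divide[OF DF]) (use assms(4) in \<open>auto intro!: derivative_eq_intros\<close>)
  then show ?thesis using DERIV_cong_ev[OF refl F(2) refl] by blast
qed

lemma Qc_tangent:
  assumes "Qc n h" "\<forall>x\<in>S. h x = 0" "\<forall>x\<in>S. coeff (fst x) n \<noteq> 0" "S \<subseteq> An n"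
    "(a, 0) \<in> zariski_closure n S" "coeff a n \<noteq> 0"
    "(p, q) \<in> zariski_tangent n (zariski_closure n S) (a, 0)"
  shows "h (a, 0) = 0" "((\<lambda>t. h (a + smult t p, 0 + smult t q)) has_field_derivative 0) (at 0)"
proof -
  have aA: "(a, 0) \<in> An n" using assms(5) closure_An by blast
  have pA: "(p, q) \<in> An n" using assms(7) unfolding zariski_tangent_def by auto
  obtain e F where F: "F \<in> polyfun n" "\<forall>x\<in>An n. coeff (fst x) n \<noteq> 0 \<longrightarrow> coeff (fst x) n ^ e * h x = F x"
    "eventually (\<lambda>t. h (a + smult t p, 0 + smult t q) = F (a + smult t p, 0 + smult t q) / (coeff a n + t * coeff p n) ^ e) (nhds 0)"
    using Qc_line_eq[OF assms(1) aA pA assms(6)] by blast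
  have FS: "F \<in> vanishing_ideal n S"
    unfolding vanishing_ideal_def using F(1,2) assms(2,3,4) by force
  then have FU: "F \<in> vanishing_ideal n (zariski_closure n S)" by (rule vanish_closure)
  have F0: "F (a, 0) = 0" using FS assms(5) unfolding zariski_closure_def by blast
  show "h (a, 0) = 0" using F(2) aA assms(6) F0 by force
  have DF: "((\<lambda>t. F (a + smult t p, 0 + smult t q)) has_field_derivative 0) (at 0)"
    using assms(7) FU unfolding zariski_tangent_def by auto
  have "((\<lambda>t. F (a + smult t p, 0 + smult t q) / (coeff a n + t * coeff p n) ^ e) has_field_derivative
     (0 * (coeff a n + 0 * coeff p n) ^ e - F (a + smult 0 p, 0 + smult 0 q) * (of_nat e * (coeff p n * (coeff a n + 0 * coeff p n) ^ (e - 1)))) /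
      ((coeff a n + 0 * coeff p n) ^ e * (coeff a n + 0 * coeff p n) ^ e)) (at 0)"
    by (rule DERIV_divide[OF DF]) (use assms(6) in \<open>auto intro!: derivative_eq_intros\<close>)
  then have "((\<lambda>t. F (a + smult t p, 0 + smult t q) / (coeff a n + t * coeff p n) ^ e) has_field_derivative 0) (at 0)"
    using F0 by simp
  then show "((\<lambda>t. h (a + smult t p, 0 + smult t q)) has_field_derivative 0) (at 0)"
    using DERIV_cong_ev[OF refl F(3) refl] by blast
qed

lemma HD_coeff_deriv: "HD H d \<Longrightarrow> ((\<lambda>t. coeff (H t) j) has_field_derivative coeff d j) (at 0)"
  unfolding HD_def by blast

lemma QP_HD_exists:
  assumes "QP n P" "\<And>x. degree (P x) \<le> D" "(a, b) \<in> An n" "(p, q) \<in> An n" "coeff a n \<noteq> 0"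
  shows "\<exists>d. HD (\<lambda>t. P (a + smult t p, b + smult t q)) d"
  by (rule HD_exists[OF assms(2)]) (rule Qc_deriv[OF Qc_coeff[OF assms(1)] assms(3-5)])

lemma QP_HD_zero:
  assumes "QP n P" "\<forall>x\<in>S. P x = 0" "\<forall>x\<in>S. coeff (fst x) n \<noteq> 0" "S \<subseteq> An n"
    "(a, 0) \<in> zariski_closure n S" "coeff a n \<noteq> 0"
    "(p, q) \<in> zariski_tangent n (zariski_closure n S) (a, 0)"
  shows "P (a, 0) = 0" "HD (\<lambda>t. P (a + smult t p, 0 + smult t q)) 0"
proof -
  have "\<forall>x\<in>S. coeff (P x) j = 0" for j using assms(2) by simp
  note T = Qc_tangent[OF Qc_coeff[OF assms(1)] this assms(3-7)]
  show "P (a, 0) = 0" using T(1) by (intro poly_eqI) simp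
  show "HD (\<lambda>t. P (a + smult t p, 0 + smult t q)) 0" unfolding HD_def using T(2) by simp
qed

lemma pcompose_inj:
  fixes p q V :: "complex poly"
  assumes "pcompose p V = pcompose q V" "degree V > 0"
  shows "p = q"
  using pcompose_eq_0[of "p - q" V] assms by (simp add: pcompose_diff)

lemma tangent_sub:
  fixes n k :: nat
  assumes k: "1 < k" "k dvd n + 1"
    and aU: "(a, 0) \<in> U_set n k" and c: "coeff a n \<noteq> 0"
    and W: "degree W = k" "poly W 0 = poly W 1"
    and At: "degree At = (n + 1) div k" "prim a = pcompose At W"
    and v: "(p1, q1) \<in> zariski_tangent n (U_set n k) (a, 0)"
  shows "\<exists>Pt Qt R. degree Pt \<le> (n + 1) div k \<and> degree Qt \<le> (n + 1) div k \<and>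
              degree R \<le> k \<and> poly R 0 = poly R 1 \<and>
              prim p1 = pcompose Pt W + R * pcompose (pderiv At) W \<and>
              prim q1 = pcompose Qt W"
proof -
  define m where "m = (n + 1) div k"
  have m1: "1 \<le> m" unfolding m_def using m_pos[OF k] .
  have mk: "m * k = n + 1" unfolding m_def using k(2) by simp
  have k1: "1 \<le> k" using k by simp
  define S where "S = Sset n k"
  have U: "U_set n k = zariski_closure n S" unfolding S_def by (rule U_Sset)
  have SA: "S \<subseteq> An n" unfolding S_def by (rule S_An)
  have Sc: "\<forall>x\<in>S. coeff (fst x) n \<noteq> 0" unfolding S_def using S_c[OF _ k] by auto
  note aU' = aU[unfolded U]
  note v' = v[unfolded U]
  have aA: "(a, 0) \<in> An n" using aU' closure_An by blast
  have pA: "(p1, q1) \<in> An n" using v unfolding zariski_tangent_def by auto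
  define Af where "Af x = prim (fst x)" for x :: "complex poly \<times> complex poly"
  define cf where "cf x = coeff (Af x) (m * k)" for x
  define Vf where "Vf x = rv k m (Af x) (k - 1)" for x
  define Bf where "Bf x = smult (1 / cf x) (Af x)" for x
  define GAf where "GAf x = gpoly k m (Vf x) (Bf x) (Suc m)" for x
  define EAf where "EAf x = res k m (Vf x) (Bf x) (Suc m)" for x
  define GBf where "GBf x = gpoly k m (Vf x) (prim (snd x)) (Suc m)" for x
  define EBf where "EBf x = res k m (Vf x) (prim (snd x)) (Suc m)" for x
  have cf_eq: "cf x = coeff (fst x) n / of_nat (n + 1)" for x
    unfolding cf_def Af_def mk by (simp add: coeff_prim del: of_nat_Suc)
  have QAf: "QP n Af" unfolding Af_def by (rule QP_prim_fst)
  have Qcf: "Qc n (\<lambda>x. 1 / cf x)"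
  proof -
    have "(\<lambda>x. 1 / cf x) = (\<lambda>x. of_nat (n + 1) * (1 / coeff (fst x) n))"
      by (simp add: cf_eq)
    then show ?thesis using Qc_cmult[OF Qc_inv_c] by simp
  qed
  have QVf: "QP n Vf" unfolding Vf_def
    by (rule QP_rv[OF QAf]) (use Qcf in \<open>simp add: cf_def\<close>)
  have QBf: "QP n Bf" unfolding Bf_def by (rule QP_smult[OF Qcf QAf])
  have QGAf: "QP n GAf" unfolding GAf_def by (rule QP_gpoly[OF QVf QBf])
  have QEAf: "QP n EAf" unfolding EAf_def by (rule QP_res[OF QVf QBf])
  have QGBf: "QP n GBf" unfolding GBf_def by (rule QP_gpoly[OF QVf QP_prim_snd])
  have QEBf: "QP n EBf" unfolding EBf_def by (rule QP_res[OF QVf QP_prim_snd])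
  have QV1: "Qc n (\<lambda>x. poly (Vf x) 1)" by (rule Qc_poly1[OF QVf, of k]) (simp add: Vf_def degree_rv)
  have vanS: "EAf x = 0 \<and> EBf x = 0 \<and> poly (Vf x) 1 = 0" if x: "x \<in> S" for x
  proof -
    obtain a' b' where ab: "x = (a', b')" by (cases x)
    obtain V0 G H where h: "degree V0 = k" "coeff V0 k = 1" "coeff V0 0 = 0" "poly V0 1 = 0"
      "degree G = m" "degree H = m" "prim a' = pcompose G V0" "prim b' = pcompose H V0"
      using S_struct[OF x[unfolded ab S_def] k] unfolding m_def by blast
    have V: "Vf x = V0" unfolding Vf_def Af_def ab using rv_final[OF k1 m1 h(1-3,5,7)] by simp
    have "Bf x = pcompose (smult (1 / cf x) G) V0" unfolding Bf_def Af_def ab using h(7) by (simp add: pcompose_smult)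
    then have "EAf x = 0" unfolding EAf_def V using res_zero[OF h(1,2) k1, of "smult (1 / cf x) G" m] h(5) by simp
    moreover have "EBf x = 0" unfolding EBf_def V using ab res_zero[OF h(1,2) k1, of H m] h(6,8) by simp
    ultimately show ?thesis using V h(4) by simp
  qed
  note ZA = QP_HD_zero[OF QEAf _ Sc SA aU' c v'] 
  note ZB = QP_HD_zero[OF QEBf _ Sc SA aU' c v']
  have ZA0: "EAf (a, 0) = 0" and ZAd: "HD (\<lambda>t. EAf (a + smult t p1, 0 + smult t q1)) 0"
    using ZA vanS by blast+
  have ZB0: "EBf (a, 0) = 0" and ZBd: "HD (\<lambda>t. EBf (a + smult t p1, 0 + smult t q1)) 0"
    using ZB vanS by blast+
  have ZV: "((\<lambda>t. poly (Vf (a + smult t p1, 0 + smult t q1)) 1) has_field_derivative 0) (at 0)"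
    using Qc_tangent(2)[OF QV1 _ Sc SA aU' c v'] vanS by blast
  define L where "L t = (a + smult t p1, 0 + smult t q1)" for t :: complex
  have L0: "L 0 = (a, 0)" unfolding L_def by simp
  obtain dV where dV: "HD (\<lambda>t. Vf (L t)) dV"
    using QP_HD_exists[OF QVf _ aA pA c] unfolding L_def by (metis Vf_def degree_rv)
  obtain dGA where dGA: "HD (\<lambda>t. GAf (L t)) dGA"
    using QP_HD_exists[OF QGAf _ aA pA c] unfolding L_def by (metis GAf_def degree_gpoly)
  obtain dGB where dGB: "HD (\<lambda>t. GBf (L t)) dGB"
    using QP_HD_exists[OF QGBf _ aA pA c] unfolding L_def by (metis GBf_def degree_gpoly)
  have degdV: "degree dV \<le> k" by (rule HD_degree[OF dV]) (simp add: Vf_def degree_rv)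
  have degdGA: "degree dGA \<le> m" by (rule HD_degree[OF dGA]) (simp add: GAf_def degree_gpoly)
  have degdGB: "degree dGB \<le> m" by (rule HD_degree[OF dGB]) (simp add: GBf_def degree_gpoly)
  have AL: "Af (L t) = prim a + smult t (prim p1)" for t unfolding Af_def L_def by (simp add: prim_add prim_smult)
  have BL: "prim (snd (L t)) = 0 + smult t (prim q1)" for t unfolding L_def by (simp add: prim_smult)
  have HA: "HD (\<lambda>t. Af (L t)) (prim p1)" unfolding AL by (rule HD_line)
  have HB: "HD (\<lambda>t. prim (snd (L t))) (prim q1)" unfolding BL by (rule HD_line)
  define cA0 where "cA0 = coeff (prim a) (m * k)"
  define c1 where "c1 = coeff (prim p1) (m * k)"
  have cA0: "cA0 \<noteq> 0" unfolding cA0_def mk using c by (simp add: coeff_prim del: of_nat_Suc)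
  have cL: "cf (L t) = cA0 + t * c1" for t unfolding cf_def AL cA0_def c1_def by simp
  have dinv: "((\<lambda>t. 1 / cf (L t)) has_field_derivative (0 * (cA0 + 0 * c1) - 1 * c1) / ((cA0 + 0 * c1) * (cA0 + 0 * c1))) (at 0)"
    unfolding cL by (rule DERIV_divide) (use cA0 in \<open>auto intro!: derivative_eq_intros\<close>)
  define di where "di = - c1 / (cA0 * cA0)"
  have dinv': "((\<lambda>t. 1 / cf (L t)) has_field_derivative di) (at 0)" using dinv unfolding di_def by simp
  define V0 where "V0 = Vf (a, 0)"
  define GA0 where "GA0 = GAf (a, 0)"
  have cf0: "cf (a, 0) = cA0" unfolding cf_def Af_def cA0_def by simp
  have EAform: "EAf x = Bf x - pcompose (GAf x) (Vf x)" for x unfolding EAf_def GAf_def by (rule res_gpoly)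
  have EBform: "EBf x = prim (snd x) - pcompose (GBf x) (Vf x)" for x unfolding EBf_def GBf_def by (rule res_gpoly)
  have HEA: "HD (\<lambda>t. EAf (L t)) ((smult di (Af (L 0)) + smult (1 / cf (L 0)) (prim p1)) -
        (pcompose dGA (Vf (L 0)) + pcompose (pderiv (GAf (L 0))) (Vf (L 0)) * dV))"
    unfolding EAform Bf_def
    by (intro HD_diff HD_smult[OF dinv' HA] HD_pcompose[OF dGA dV, of m]) (simp add: GAf_def degree_gpoly)
  have ZAd': "HD (\<lambda>t. EAf (L t)) 0" using ZAd unfolding L_def .
  have eqA: "smult di (prim a) + smult (1 / cA0) (prim p1) = pcompose dGA V0 + pcompose (pderiv GA0) V0 * dV"
    using HD_unique[OF HEA ZAd'] unfolding L0 V0_def GA0_def cf0 by (simp add: Af_def)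
  have GB0: "GBf (a, 0) = 0" unfolding GBf_def by (simp add: gpoly_0)
  have HEB: "HD (\<lambda>t. EBf (L t)) (prim q1 - (pcompose dGB (Vf (L 0)) + pcompose (pderiv (GBf (L 0))) (Vf (L 0)) * dV))"
    unfolding EBform
    by (intro HD_diff HB HD_pcompose[OF dGB dV, of m]) (simp add: GBf_def degree_gpoly)
  have ZBd': "HD (\<lambda>t. EBf (L t)) 0" using ZBd unfolding L_def .
  have eqB: "prim q1 = pcompose dGB V0"
    using HD_unique[OF HEB ZBd'] unfolding L0 V0_def GB0 by simp
  note N = normalize[OF W(1) k1]
  define lw where "lw = lead_coeff W"
  define mu where "mu = poly W 0"
  define Aff where "Aff = [:mu, lw:]"
  have lw: "lw \<noteq> 0" unfolding lw_def using W k by auto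
  have V0n: "V0 = smult (1 / lw) (W - [:mu:])"
  proof -
    have "prim a = pcompose (pcompose At Aff) (smult (1 / lw) (W - [:mu:]))"
      using At(2) N(5)[of At] unfolding Aff_def lw_def mu_def by simp
    then show ?thesis unfolding V0_def Vf_def Af_def lw_def mu_def
      using rv_final[OF k1 m1 N(1,2,3), of "pcompose At Aff"] N(6)[of At] At(1)
      unfolding Aff_def m_def lw_def mu_def by simp
  qed
  have degV0: "degree V0 = k" unfolding V0n lw_def mu_def using N(1) by simp
  have compW: "pcompose P W = pcompose (pcompose P Aff) V0" for P
    unfolding V0n Aff_def lw_def mu_def by (rule N(5))
  define Inv where "Inv = [:- mu / lw, 1 / lw:]"
  have InvW: "pcompose Inv W = V0" unfolding Inv_def V0n using lw
    by (simp add: pcompose_pCons smult_diff_right)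
  have compV: "pcompose Y V0 = pcompose (pcompose Y Inv) W" for Y
    unfolding InvW[symmetric] by (rule pcompose_assoc)
  have GA0eq: "smult (1 / cA0) (prim a) = pcompose GA0 V0"
    using ZA0 unfolding EAform Bf_def GA0_def V0_def cf0 by (simp add: Af_def)
  have "pcompose (pcompose At Aff) V0 = pcompose (smult cA0 GA0) V0"
  proof -
    have "pcompose (smult cA0 GA0) V0 = smult cA0 (smult (1 / cA0) (prim a))"
      using GA0eq by (simp add: pcompose_smult)
    also have "\<dots> = prim a" using cA0 by simp
    finally show ?thesis using At(2) compW[of At] by simp
  qed
  then have AtAff: "pcompose At Aff = smult cA0 GA0" by (rule pcompose_inj) (use degV0 k in simp)
  have "pderiv (pcompose At Aff) = smult lw (pcompose (pderiv At) Aff)"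
    unfolding Aff_def by (simp add: pderiv_pcompose pderiv_pCons)
  then have dGA0: "smult cA0 (pderiv GA0) = smult lw (pcompose (pderiv At) Aff)"
    using AtAff by (simp add: pderiv_smult)
  have pdGA0: "pcompose (pderiv GA0) V0 = smult (lw / cA0) (pcompose (pderiv At) W)"
  proof -
    have "pderiv GA0 = smult (lw / cA0) (pcompose (pderiv At) Aff)"
      using arg_cong[OF dGA0, of "smult (1 / cA0)"] cA0 by simp
    then show ?thesis using compW[of "pderiv At"] by (simp add: pcompose_smult)
  qed
  define Pt where "Pt = smult cA0 (pcompose dGA Inv) - smult (cA0 * di) At"
  define Qt where "Qt = pcompose dGB Inv"
  define R where "R = smult lw dV"
  have P1: "prim p1 = pcompose Pt W + R * pcompose (pderiv At) W"
  proof -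
    have "prim p1 = smult cA0 (pcompose dGA V0 + pcompose (pderiv GA0) V0 * dV - smult di (prim a))"
      using arg_cong[OF eqA, of "\<lambda>X. smult cA0 (X - smult di (prim a))"] cA0 by simp
    also have "\<dots> = pcompose Pt W + R * pcompose (pderiv At) W"
      unfolding Pt_def R_def pdGA0 compV[of dGA] At(2) using cA0
      by (simp add: pcompose_diff pcompose_smult algebra_simps smult_diff_right smult_add_right)
    finally show ?thesis .
  qed
  have Q1: "prim q1 = pcompose Qt W" unfolding Qt_def eqB compV ..
  have degInv: "degree Inv = 1" unfolding Inv_def using lw by simp
  have dPt: "degree Pt \<le> m" unfolding Pt_def
    by (intro degree_diff_le order.trans[OF degree_smult_le]) (use degdGA degInv At(1) m_def in \<open>simp_all add: degree_pcompose\<close>)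
  have dQt: "degree Qt \<le> m" unfolding Qt_def using degdGB degInv by (simp add: degree_pcompose)
  have dR: "degree R \<le> k" unfolding R_def using degdV by (simp add: order.trans[OF degree_smult_le])
  have c0: "coeff dV 0 = 0"
  proof -
    have "coeff (Vf (L t)) 0 = 0" for t unfolding Vf_def by (rule coeff0_rv) (use k in simp)
    then have "((\<lambda>t. 0) has_field_derivative coeff dV 0) (at 0)" using HD_coeff_deriv[OF dV, of 0] by simp
    then show ?thesis using DERIV_unique DERIV_const by blast
  qed
  have p1: "poly dV 1 = 0"
  proof -
    have eq: "poly (Vf (L t)) 1 = (\<Sum>j\<le>k. coeff (Vf (L t)) j)" for t
    proof -
      have "poly (Vf (L t)) 1 = poly (\<Sum>i\<le>k. monom (coeff (Vf (L t)) i) i) 1"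
        using poly_as_sum_of_monoms'[of "Vf (L t)" k] by (simp add: Vf_def degree_rv)
      then show ?thesis by (simp add: poly_sum poly_monom)
    qed
    have "((\<lambda>t. \<Sum>j\<le>k. coeff (Vf (L t)) j) has_field_derivative (\<Sum>j\<le>k. coeff dV j)) (at 0)"
      by (intro DERIV_sum HD_coeff_deriv[OF dV])
    moreover have "((\<lambda>t. \<Sum>j\<le>k. coeff (Vf (L t)) j) has_field_derivative 0) (at 0)"
      using ZV unfolding L_def[symmetric] eq .
    ultimately have "(\<Sum>j\<le>k. coeff dV j) = 0" using DERIV_unique by blast
    moreover have "poly dV 1 = (\<Sum>j\<le>k. coeff dV j)"
    proof -
      have "poly dV 1 = poly (\<Sum>i\<le>k. monom (coeff dV i) i) 1"
        using poly_as_sum_of_monoms'[OF degdV] by simp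
      then show ?thesis by (simp add: poly_sum poly_monom)
    qed
    ultimately show ?thesis by simp
  qed
  have R01: "poly R 0 = poly R 1" unfolding R_def using c0 p1 by (simp add: poly_0_coeff_0)
  show ?thesis unfolding m_def[symmetric]
    using dPt dQt dR R01 P1 Q1 by blast
qed

lemma HD_pderiv: "HD H d \<Longrightarrow> HD (\<lambda>t. pderiv (H t)) (pderiv d)"
  unfolding HD_def coeff_pderiv by (auto intro!: DERIV_cmult)

lemma ev_ne0: "eventually (\<lambda>t. t \<noteq> (0::complex)) (at 0)"
  by (simp add: eventually_at_filter)

lemma degree_eq_from:
  fixes p :: "complex poly"
  assumes "degree p \<le> d" "coeff p d \<noteq> 0" shows "degree p = d"
  using assms le_degree by (metis antisym)

lemma prim_pderiv_pcompose:
  "prim (pderiv (pcompose G V)) = pcompose (G - [:coeff (pcompose G V) 0:]) V"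
  by (simp add: prim_pderiv pcompose_diff)

lemma degree_minus_const:
  fixes G :: "complex poly"
  assumes "degree G \<ge> 1" shows "degree (G - [:c:]) = degree G"
proof -
  have "degree (G + (- [:c:])) = degree G" using assms by (intro degree_add_eq_left) simp
  then show ?thesis by (simp add: diff_conv_add_uminus del: add_uminus_conv_diff)
qed

lemma in_S_build:
  fixes n k :: nat
  assumes k: "1 < k" "k dvd n + 1"
    and G: "degree G = (n + 1) div k" and H: "degree H = (n + 1) div k"
    and V: "degree V = k" "poly V 0 = poly V 1"
  shows "(pderiv (pcompose G V), pderiv (pcompose H V)) \<in> Sset n k"
proof -
  define m where "m = (n + 1) div k"
  have m1: "1 \<le> m" unfolding m_def using m_pos[OF k] .
  have mk: "m * k = n + 1" unfolding m_def using k(2) by simp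
  have dG: "degree (pcompose G V) = n + 1" using G V mk unfolding m_def by (simp add: degree_pcompose)
  have dH: "degree (pcompose H V) = n + 1" using H V mk unfolding m_def by (simp add: degree_pcompose)
  have An: "(pderiv (pcompose G V), pderiv (pcompose H V)) \<in> An n"
    unfolding An_def using dG dH by (simp add: degree_pderiv)
  show ?thesis unfolding Sset_def
    apply (simp only: mem_Collect_eq case_prod_conv)
    apply (intro conjI An)
    apply (rule exI[of _ "G - [:coeff (pcompose G V) 0:]"])
    apply (rule exI[of _ "H - [:coeff (pcompose H V) 0:]"])
    apply (rule exI[of _ V])
    using G H V m1 unfolding m_def by (simp add: degree_minus_const prim_pderiv_pcompose)
qed

lemma tangent_sup:
  fixes n k :: nat
  assumes k: "1 < k" "k dvd n + 1"
    and aU: "(a, 0) \<in> U_set n k"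
    and W: "degree W = k" "poly W 0 = poly W 1"
    and At: "degree At = (n + 1) div k" "prim a = pcompose At W"
    and pq: "(p1, q1) \<in> An n"
    and h: "degree Pt \<le> (n + 1) div k" "degree Qt \<le> (n + 1) div k"
      "degree R \<le> k" "poly R 0 = poly R 1"
      "prim p1 = pcompose Pt W + R * pcompose (pderiv At) W"
      "prim q1 = pcompose Qt W"
  shows "(p1, q1) \<in> zariski_tangent n (U_set n k) (a, 0)"
  unfolding zariski_tangent_def
proof (intro CollectI conjI pq ballI)
  fix f assume f: "f \<in> vanishing_ideal n (U_set n k)"
  define m where "m = (n + 1) div k"
  have m1: "1 \<le> m" unfolding m_def using m_pos[OF k] .
  have fp: "f \<in> polyfun n" and fU: "\<forall>s\<in>U_set n k. f s = 0" using f unfolding vanishing_ideal_def by auto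
  have SU: "Sset n k \<subseteq> U_set n k" unfolding U_Sset by (rule S_sub_closure[OF S_An])
  define Gt where "Gt t = At + smult t Pt" for t :: complex
  define Wt where "Wt t = W + smult t R" for t :: complex
  define Bt where "Bt t = smult t Qt + smult (t * t) (monom 1 m)" for t :: complex
  define \<gamma> where "\<gamma> t = (pderiv (pcompose (Gt t) (Wt t)), pderiv (pcompose (Bt t) (Wt t)))" for t
  have HG: "HD Gt Pt" unfolding Gt_def by (rule HD_line)
  have HW: "HD Wt R" unfolding Wt_def by (rule HD_line)
  have HB: "HD Bt Qt" unfolding HD_def Bt_def by (auto intro!: derivative_eq_intros)
  have dGt: "degree (Gt t) \<le> m" for t unfolding Gt_def m_def using At(1) h(1)
    by (intro degree_add_le order.trans[OF degree_smult_le]) auto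
  have dBt: "degree (Bt t) \<le> m" for t unfolding Bt_def m_def using h(2)
    by (intro degree_add_le order.trans[OF degree_smult_le]) (auto simp: degree_monom_le)
  have G0: "Gt 0 = At" "Wt 0 = W" "Bt 0 = 0" unfolding Gt_def Wt_def Bt_def by auto
  have H1: "HD (\<lambda>t. fst (\<gamma> t)) p1"
  proof -
    have "HD (\<lambda>t. pderiv (pcompose (Gt t) (Wt t))) (pderiv (pcompose Pt (Wt 0) + pcompose (pderiv (Gt 0)) (Wt 0) * R))"
      by (intro HD_pderiv HD_pcompose[OF HG HW dGt])
    moreover have "pcompose Pt (Wt 0) + pcompose (pderiv (Gt 0)) (Wt 0) * R = prim p1"
      using h(5) G0 by (simp add: mult.commute)
    ultimately show ?thesis unfolding \<gamma>_def by simp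
  qed
  have H2: "HD (\<lambda>t. snd (\<gamma> t)) q1"
  proof -
    have "HD (\<lambda>t. pderiv (pcompose (Bt t) (Wt t))) (pderiv (pcompose Qt (Wt 0) + pcompose (pderiv (Bt 0)) (Wt 0) * R))"
      by (intro HD_pderiv HD_pcompose[OF HB HW dBt])
    moreover have "pcompose Qt (Wt 0) + pcompose (pderiv (Bt 0)) (Wt 0) * R = prim q1"
      using h(6) G0 by simp
    ultimately show ?thesis unfolding \<gamma>_def by simp
  qed
  have g0: "\<gamma> 0 = (a, 0)"
  proof -
    have "\<gamma> 0 = (pderiv (pcompose At W), pderiv (pcompose 0 W))" unfolding \<gamma>_def G0 ..
    also have "\<dots> = (pderiv (prim a), 0)" using At(2) by simp
    finally show ?thesis by simp
  qed
  obtain Df where D: "\<forall>\<gamma> V. (\<forall>i\<le>n. ((\<lambda>t. coeff (fst (\<gamma> t)) i) has_field_derivative coeff (fst V) i) (at 0)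
            \<and> ((\<lambda>t. coeff (snd (\<gamma> t)) i) has_field_derivative coeff (snd V) i) (at 0))
         \<longrightarrow> ((\<lambda>t. f (\<gamma> t)) has_field_derivative Df (\<gamma> 0) V) (at 0)"
    using polyfun_deriv[OF fp] by blast
  have d1: "((\<lambda>t. f (\<gamma> t)) has_field_derivative Df (a, 0) (p1, q1)) (at 0)"
    using D[rule_format, of \<gamma> "(p1, q1)"] H1 H2 g0 unfolding HD_def by simp
  have "((\<lambda>t. coeff a i + t * coeff p1 i) has_field_derivative coeff p1 i) (at 0)"
     "((\<lambda>t. t * coeff q1 i) has_field_derivative coeff q1 i) (at 0)" for i
    by (auto intro!: derivative_eq_intros)
  then have d2: "((\<lambda>t. f (a + smult t p1, 0 + smult t q1)) has_field_derivative Df (a, 0) (p1, q1)) (at 0)"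
    using D[rule_format, of "\<lambda>t. (a + smult t p1, 0 + smult t q1)" "(p1, q1)"] by simp
  have lcAt: "coeff At m \<noteq> 0" using At(1) m1 unfolding m_def by (metis leading_coeff_0_iff not_one_le_zero degree_0)
  have lcW: "coeff W k \<noteq> 0" using W(1) k by (metis leading_coeff_0_iff degree_0 not_one_less_zero)
  have ev1: "eventually (\<lambda>t. coeff At m + t * coeff Pt m \<noteq> 0) (at 0)"
    using c_eventually[OF lcAt] by (simp add: eventually_nhds_conv_at)
  have ev2: "eventually (\<lambda>t. coeff W k + t * coeff R k \<noteq> 0) (at 0)"
    using c_eventually[OF lcW] by (simp add: eventually_nhds_conv_at)
  have ev3: "eventually (\<lambda>t. t * coeff Qt m + t * t \<noteq> 0) (at 0)"
  proof (cases "coeff Qt m = 0")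
    case True
    then show ?thesis using ev_ne0 by (rule_tac eventually_mono[OF ev_ne0]) simp
  next
    case False
    have "eventually (\<lambda>t. coeff Qt m + t * 1 \<noteq> 0) (at 0)"
      using c_eventually[OF False, of 1] by (simp add: eventually_nhds_conv_at)
    then show ?thesis using ev_ne0
      by (rule eventually_elim2) (metis distrib_left mult_1_right mult_eq_0_iff)
  qed
  have evS: "eventually (\<lambda>t. \<gamma> t \<in> Sset n k) (at 0)"
    using eventually_conj[OF ev1 eventually_conj[OF ev2 ev3]]
  proof (rule eventually_mono)
    fix t assume "coeff At m + t * coeff Pt m \<noteq> 0 \<and> coeff W k + t * coeff R k \<noteq> 0 \<and> t * coeff Qt m + t * t \<noteq> 0"
    then have t: "coeff At m + t * coeff Pt m \<noteq> 0" "coeff W k + t * coeff R k \<noteq> 0" "t * coeff Qt m + t * t \<noteq> 0" by auto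
    have "degree (Gt t) = m" by (rule degree_eq_from[OF dGt]) (use t in \<open>simp add: Gt_def\<close>)
    moreover have "degree (Bt t) = m" by (rule degree_eq_from[OF dBt]) (use t in \<open>simp add: Bt_def\<close>)
    moreover have "degree (Wt t) = k"
    proof (rule degree_eq_from)
      show "degree (Wt t) \<le> k" unfolding Wt_def using W(1) h(3)
        by (intro degree_add_le order.trans[OF degree_smult_le]) auto
    qed (use t in \<open>simp add: Wt_def\<close>)
    moreover have "poly (Wt t) 0 = poly (Wt t) 1" unfolding Wt_def using W(2) h(4) by simp
    ultimately show "\<gamma> t \<in> Sset n k" unfolding \<gamma>_def m_def by (intro in_S_build k) auto
  qed
  have ev: "eventually (\<lambda>t. f (\<gamma> t) = (\<lambda>_. 0) t) (nhds 0)"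
    unfolding eventually_nhds_conv_at
  proof
    show "eventually (\<lambda>t. f (\<gamma> t) = 0) (at 0)" using evS by (rule eventually_mono) (use fU SU in blast)
    show "f (\<gamma> 0) = 0" using fU aU g0 by simp
  qed
  then have "((\<lambda>t. f (\<gamma> t)) has_field_derivative 0) (at 0)"
    using DERIV_cong_ev[OF refl ev refl] DERIV_const by blast
  then have "Df (a, 0) (p1, q1) = 0" using d1 DERIV_unique by blast
  then show "((\<lambda>t. f (fst (a, 0) + smult t (fst (p1, q1)), snd (a, 0) + smult t (snd (p1, q1)))) has_field_derivative 0) (at 0)"
    using d2 by simp
qed

lemma exists_point:
  fixes n k :: nat
  assumes k: "1 < k" "k dvd n + 1"
  shows "\<exists>a. (a, 0) \<in> U_set n k \<and> coeff a n \<noteq> 0"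
proof -
  define m where "m = (n + 1) div k"
  have m1: "1 \<le> m" unfolding m_def using m_pos[OF k] .
  have mk: "m * k = n + 1" unfolding m_def using k(2) by simp
  define W0 :: "complex poly" where "W0 = monom 1 (k - 1) * [:-1, 1:]"
  have dW0: "degree W0 = k" unfolding W0_def using k by (subst degree_mult_eq) (auto simp: degree_monom_eq)
  have pW0: "poly W0 0 = poly W0 1" using k unfolding W0_def by (simp add: poly_monom)
  have W0nz: "W0 \<noteq> 0" using dW0 k by auto
  have lW0: "lead_coeff W0 = 1" unfolding W0_def by (subst lead_coeff_mult) (simp add: lead_coeff_monom degree_monom_eq)
  define A0 where "A0 = pcompose (monom 1 m) W0"
  define a where "a = pderiv A0"
  have dA0: "degree A0 = n + 1" unfolding A0_def using dW0 mk by (simp add: degree_pcompose degree_monom_eq mult.commute)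
  have lA0: "lead_coeff A0 = 1" unfolding A0_def using lead_coeff_comp[of W0 "monom 1 m"] dW0 k lW0
    by (simp add: degree_monom_eq)
  have c0: "coeff A0 0 = 0" unfolding A0_def using m1 pW0
    by (simp add: pcompose_monom poly_0_coeff_0[symmetric] W0_def poly_monom)
  have primA: "prim a = A0" unfolding a_def prim_pderiv c0 by simp
  have ca: "coeff a n \<noteq> 0" unfolding a_def coeff_pderiv using dA0 lA0 by (simp del: of_nat_Suc)
  have aA: "(a, 0) \<in> An n" unfolding An_def a_def using dA0 by (simp add: degree_pderiv)
  have inS: "(a, smult t a) \<in> Sset n k" if t: "t \<noteq> 0" for t
  proof -
    have "(a, smult t a) \<in> An n" using aA unfolding An_def by (simp add: order.trans[OF degree_smult_le])
    moreover have "prim (smult t a) = pcompose (monom t m) W0"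
      unfolding prim_smult primA A0_def by (simp add: pcompose_monom)
    moreover have "prim a = pcompose (monom 1 m) W0" using primA A0_def by simp
    ultimately show ?thesis unfolding Sset_def m_def[symmetric]
      apply (simp only: mem_Collect_eq case_prod_conv)
      apply (rule conjI, simp)
      apply (rule exI[of _ "monom 1 m"], rule exI[of _ "monom t m"], rule exI[of _ W0])
      using dW0 pW0 t by (simp add: degree_monom_eq)
  qed
  have "(a, 0) \<in> zariski_closure n (Sset n k)"
    unfolding zariski_closure_def
  proof (intro CollectI conjI aA ballI)
    fix f assume f: "f \<in> vanishing_ideal n (Sset n k)"
    then have fp: "f \<in> polyfun n" unfolding vanishing_ideal_def by auto
    obtain D where D: "((\<lambda>t. f (a + smult t 0, 0 + smult t a)) has_field_derivative D) (at 0)"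
      using line_deriv_polyfun[OF fp] by blast
    have "isCont (\<lambda>t. f (a + smult t 0, 0 + smult t a)) 0" using DERIV_isCont[OF D] .
    then have l1: "(\<lambda>t. f (a + smult t 0, 0 + smult t a)) \<midarrow>0\<rightarrow> f (a, 0)" by (simp add: isCont_def)
    have "eventually (\<lambda>t. 0 = f (a + smult t 0, 0 + smult t a)) (at 0)"
      using ev_ne0 by (rule eventually_mono) (use f inS in \<open>auto simp: vanishing_ideal_def\<close>)
    then have l2: "(\<lambda>t. f (a + smult t 0, 0 + smult t a)) \<midarrow>0\<rightarrow> 0"
      by (rule Lim_transform_eventually[OF tendsto_const])
    show "f (a, 0) = 0" using LIM_unique[OF l1 l2] .
  qed
  then show ?thesis using ca unfolding U_Sset by blast
qed

theorem mainTheorem4: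
  fixes n k :: nat
  assumes "k > 1" and "k dvd n + 1"
  shows "\<exists>g \<in> polyfun n.
     (\<exists>a. (a, 0) \<in> U_set n k \<and> g (a, 0) \<noteq> 0) \<and>
     (\<forall>a At W. (a, 0) \<in> U_set n k \<longrightarrow> g (a, 0) \<noteq> 0 \<longrightarrow>
        degree W = k \<longrightarrow> poly W 0 = poly W 1 \<longrightarrow> degree At = (n + 1) div k \<longrightarrow>
        prim a = pcompose At W \<longrightarrow>
        zariski_tangent n (U_set n k) (a, 0) =
          {(p1, q1) \<in> An n. \<exists>Pt Qt R.
              degree Pt \<le> (n + 1) div k \<and> degree Qt \<le> (n + 1) div k \<and>
              degree R \<le> k \<and> poly R 0 = poly R 1 \<and>
              prim p1 = pcompose Pt W + R * pcompose (pderiv At) W \<and>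
              prim q1 = pcompose Qt W})"
proof (rule bexI[of _ "\<lambda>x. coeff (fst x) n"], intro conjI allI impI)
  show "(\<lambda>x. coeff (fst x) n) \<in> polyfun n" by (rule polyfun_c)
  show "\<exists>a. (a, 0) \<in> U_set n k \<and> coeff (fst (a, 0 :: complex poly)) n \<noteq> 0"
    using exists_point[OF assms] by simp
next
  fix a At W :: "complex poly"
  assume aU: "(a, 0) \<in> U_set n k" and c: "coeff (fst (a, 0 :: complex poly)) n \<noteq> 0"
    and W: "degree W = k" "poly W 0 = poly W 1" and At: "degree At = (n + 1) div k" "prim a = pcompose At W"
  show "zariski_tangent n (U_set n k) (a, 0) =
          {(p1, q1) \<in> An n. \<exists>Pt Qt R.
              degree Pt \<le> (n + 1) div k \<and> degree Qt \<le> (n + 1) div k \<and>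
              degree R \<le> k \<and> poly R 0 = poly R 1 \<and>
              prim p1 = pcompose Pt W + R * pcompose (pderiv At) W \<and>
              prim q1 = pcompose Qt W}"
  proof (intro equalityI subsetI)
    fix v assume v: "v \<in> zariski_tangent n (U_set n k) (a, 0)"
    obtain p1 q1 where pq: "v = (p1, q1)" by (cases v)
    have "(p1, q1) \<in> An n" using v pq unfolding zariski_tangent_def by auto
    moreover have "\<exists>Pt Qt R. degree Pt \<le> (n + 1) div k \<and> degree Qt \<le> (n + 1) div k \<and>
              degree R \<le> k \<and> poly R 0 = poly R 1 \<and>
              prim p1 = pcompose Pt W + R * pcompose (pderiv At) W \<and>
              prim q1 = pcompose Qt W"
      using tangent_sub[OF assms aU _ W At, of p1 q1] c v pq by simp
    ultimately show "v \<in> {(p1, q1) \<in> An n. \<exists>Pt Qt R.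
              degree Pt \<le> (n + 1) div k \<and> degree Qt \<le> (n + 1) div k \<and>
              degree R \<le> k \<and> poly R 0 = poly R 1 \<and>
              prim p1 = pcompose Pt W + R * pcompose (pderiv At) W \<and>
              prim q1 = pcompose Qt W}" using pq by simp
  next
    fix v assume v: "v \<in> {(p1, q1) \<in> An n. \<exists>Pt Qt R.
              degree Pt \<le> (n + 1) div k \<and> degree Qt \<le> (n + 1) div k \<and>
              degree R \<le> k \<and> poly R 0 = poly R 1 \<and>
              prim p1 = pcompose Pt W + R * pcompose (pderiv At) W \<and>
              prim q1 = pcompose Qt W}"
    obtain p1 q1 where pq: "v = (p1, q1)" by (cases v)
    obtain Pt Qt R where h: "(p1, q1) \<in> An n" "degree Pt \<le> (n + 1) div k" "degree Qt \<le> (n + 1) div k"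
      "degree R \<le> k" "poly R 0 = poly R 1"
      "prim p1 = pcompose Pt W + R * pcompose (pderiv At) W" "prim q1 = pcompose Qt W"
      using v pq by auto
    show "v \<in> zariski_tangent n (U_set n k) (a, 0)"
      unfolding pq by (rule tangent_sup[OF assms aU W At h])
  qed
qed

end
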